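(* Let $n,k$ be integers with $1\le k<n/2$ and let $\gamma\in\mathrm{Aut}(\mathrm{DGP}(n,k))$. If $\gamma$ stabilizes any of $\mathcal{O},\mathcal{I},\mathcal{S}$ setwise, then it stabilizes $\mathcal{S}$ setwise. Moreover, if $\gamma$ stabilizes $\mathcal{S}$ setwise and either $n$ is odd or $k$ is even, then either $\gamma$ stabilizes each of $\mathcal{O}$ and $\mathcal{I}$ setwise, or $\gamma$ interchanges $\mathcal{O}$ and $\mathcal{I}$.
   Context: $\mathrm{GP}(n,k)$ ($1\le k<n/2$) has vertices $u_0,\dots,u_{n-1},v_0,\dots,v_{n-1}$ and edges $\{u_i,u_{i+1}\},\{u_i,v_i\},\{v_i,v_{i+k}\}$ (subscripts mod $n$). $\mathrm{DGP}(n,k)$ is its canonical double cover: vertex set $\{(u_i,j),(v_i,j): 0\le i\le n-1,\ j\in\{0,1\}\}$ and edges $\{(u_i,j),(u_{i+1},1-j)\}$, $\{(u_i,j),(v_i,1-j)\}$, $\{(v_i,j),(v_{i+k},1-j)\}$ for all $i$ (mod $n$) and $j\in\{0,1\}$. Let $\mathcal{O}=\{\{(u_i,j),(u_{i+1},1-j)\}\}$ (outer edges), $\mathcal{I}=\{\{(v_i,j),(v_{i+k},1-j)\}\}$ (inner edges), $\mathcal{S}=\{\{(u_i,j),(v_i,1-j)\}\}$ (spokes), over all $i\in\{0,\dots,n-1\}$, $j\in\{0,1\}$. *)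

theory Defs
  imports Main
begin

text \<open>Vertices of DGP(n,k): (u_i, j) is represented as U i j, (v_i, j) as V i j,
  with 0 <= i < n and j in {0,1}.\<close>
datatype vert = U nat nat | V nat nat

definition dgp_verts :: "nat \<Rightarrow> vert set" where
  "dgp_verts n = {U i j | i j. i < n \<and> j < 2} \<union> {V i j | i j. i < n \<and> j < 2}"

definition outer_edges :: "nat \<Rightarrow> vert set set" where
  "outer_edges n = {{U i j, U ((i + 1) mod n) (1 - j)} | i j. i < n \<and> j < 2}"

definition inner_edges :: "nat \<Rightarrow> nat \<Rightarrow> vert set set" where
  "inner_edges n k = {{V i j, V ((i + k) mod n) (1 - j)} | i j. i < n \<and> j < 2}"

definition spoke_edges :: "nat \<Rightarrow> vert set set" where
  "spoke_edges n = {{U i j, V i (1 - j)} | i j. i < n \<and> j < 2}"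

definition dgp_edges :: "nat \<Rightarrow> nat \<Rightarrow> vert set set" where
  "dgp_edges n k = outer_edges n \<union> inner_edges n k \<union> spoke_edges n"

definition dgp_aut :: "nat \<Rightarrow> nat \<Rightarrow> (vert \<Rightarrow> vert) \<Rightarrow> bool" where
  "dgp_aut n k g \<longleftrightarrow> bij_betw g (dgp_verts n) (dgp_verts n) \<and>
     (\<forall>x\<in>dgp_verts n. \<forall>y\<in>dgp_verts n.
        ({g x, g y} \<in> dgp_edges n k \<longleftrightarrow> {x, y} \<in> dgp_edges n k))"

definition edge_img :: "(vert \<Rightarrow> vert) \<Rightarrow> vert set set \<Rightarrow> vert set set" where
  "edge_img g E = (\<lambda>e. g ` e) ` E"

end

theory Submission
  imports Defs
begin

fun isU :: "vert \<Rightarrow> bool" where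
  "isU (U _ _) = True" | "isU (V _ _) = False"

lemma verts_fin: "finite (dgp_verts n)"
proof -
  have "dgp_verts n \<subseteq> (\<lambda>(i,j). U i j) ` ({..<n} \<times> {..<2}) \<union> (\<lambda>(i,j). V i j) ` ({..<n} \<times> {..<2})"
    unfolding dgp_verts_def by auto
  then show ?thesis by (rule finite_subset) auto
qed

lemma edge_sub: "e \<in> dgp_edges n k \<Longrightarrow> e \<subseteq> dgp_verts n"
  unfolding dgp_edges_def outer_edges_def inner_edges_def spoke_edges_def dgp_verts_def
  by auto

lemma edges_fin: "finite (dgp_edges n k)"
proof -
  have "dgp_edges n k \<subseteq> Pow (dgp_verts n)" using edge_sub by blast
  then show ?thesis using verts_fin by (meson finite_Pow_iff finite_subset)
qed

lemma O_U: "e \<in> outer_edges n \<Longrightarrow> x \<in> e \<Longrightarrow> isU x"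
  unfolding outer_edges_def by auto
lemma I_V: "e \<in> inner_edges n k \<Longrightarrow> x \<in> e \<Longrightarrow> \<not> isU x"
  unfolding inner_edges_def by auto
lemma S_U: "e \<in> spoke_edges n \<Longrightarrow> \<exists>x\<in>e. isU x"
  unfolding spoke_edges_def by auto
lemma S_V: "e \<in> spoke_edges n \<Longrightarrow> \<exists>x\<in>e. \<not> isU x"
  unfolding spoke_edges_def by auto
lemma S_diff: "e \<in> spoke_edges n \<Longrightarrow> x \<in> e \<Longrightarrow> y \<in> e \<Longrightarrow> x \<noteq> y \<Longrightarrow> isU x \<noteq> isU y"
  unfolding spoke_edges_def by auto
lemma O_ne: "e \<in> outer_edges n \<Longrightarrow> \<exists>x. x \<in> e"
  unfolding outer_edges_def by auto
lemma I_ne: "e \<in> inner_edges n k \<Longrightarrow> \<exists>x. x \<in> e"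
  unfolding inner_edges_def by auto

lemma allU_O: "e \<in> dgp_edges n k \<Longrightarrow> \<forall>x\<in>e. isU x \<Longrightarrow> e \<in> outer_edges n"
  unfolding dgp_edges_def using I_V I_ne S_V by blast
lemma allV_I: "e \<in> dgp_edges n k \<Longrightarrow> \<forall>x\<in>e. \<not> isU x \<Longrightarrow> e \<in> inner_edges n k"
  unfolding dgp_edges_def using O_U O_ne S_U by blast
lemma mixed_S: "e \<in> dgp_edges n k \<Longrightarrow> x \<in> e \<Longrightarrow> isU x \<Longrightarrow> y \<in> e \<Longrightarrow> \<not> isU y \<Longrightarrow> e \<in> spoke_edges n"
  unfolding dgp_edges_def using O_U I_V by blast

lemma edge_two: "e \<in> dgp_edges n k \<Longrightarrow> \<exists>x y. e = {x,y}"
  unfolding dgp_edges_def outer_edges_def inner_edges_def spoke_edges_def by auto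

context
  fixes n k :: nat and g :: "vert \<Rightarrow> vert"
  assumes aut: "dgp_aut n k g"
begin

lemma g_inj: "inj_on g (dgp_verts n)"
  using aut unfolding dgp_aut_def bij_betw_def by blast

lemma img_edge: "e \<in> dgp_edges n k \<Longrightarrow> g ` e \<in> dgp_edges n k"
proof -
  assume e: "e \<in> dgp_edges n k"
  then obtain x y where xy: "e = {x,y}" using edge_two by blast
  have "x \<in> dgp_verts n" "y \<in> dgp_verts n" using edge_sub[OF e] xy by auto
  then show ?thesis using aut e xy unfolding dgp_aut_def by auto
qed

lemma img_inj: "e \<in> dgp_edges n k \<Longrightarrow> e' \<in> dgp_edges n k \<Longrightarrow> g ` e = g ` e' \<Longrightarrow> e = e'"
  using g_inj edge_sub inj_on_image_eq_iff by metis

lemma img_inj_on: "A \<subseteq> dgp_edges n k \<Longrightarrow> inj_on (\<lambda>e. g ` e) A"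
  unfolding inj_on_def using img_inj by blast

lemma card_img: "A \<subseteq> dgp_edges n k \<Longrightarrow> card (edge_img g A) = card A"
  unfolding edge_img_def using img_inj_on card_image by blast

lemma img_in: "A \<subseteq> dgp_edges n k \<Longrightarrow> e \<in> A \<Longrightarrow> g ` e \<in> edge_img g A"
  unfolding edge_img_def by blast

lemma img_mem: "A \<subseteq> dgp_edges n k \<Longrightarrow> e \<in> dgp_edges n k \<Longrightarrow> g ` e \<in> edge_img g A \<Longrightarrow> e \<in> A"
  unfolding edge_img_def using img_inj by blast

lemma subset_eq_img: "A \<subseteq> dgp_edges n k \<Longrightarrow> edge_img g A \<subseteq> A \<Longrightarrow> edge_img g A = A"
  using card_img card_subset_eq edges_fin finite_subset by metis

lemma O_sub: "outer_edges n \<subseteq> dgp_edges n k" unfolding dgp_edges_def by blast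
lemma I_sub: "inner_edges n k \<subseteq> dgp_edges n k" unfolding dgp_edges_def by blast
lemma S_sub: "spoke_edges n \<subseteq> dgp_edges n k" unfolding dgp_edges_def by blast

lemma OS_disj: "e \<in> outer_edges n \<Longrightarrow> e \<notin> spoke_edges n"
  using O_U S_V by blast
lemma IS_disj: "e \<in> inner_edges n k \<Longrightarrow> e \<notin> spoke_edges n"
  using I_V S_U by blast
lemma OI_disj: "e \<in> outer_edges n \<Longrightarrow> e \<notin> inner_edges n k"
  using O_U I_V O_ne by blast

lemma part1O:
  assumes hO: "edge_img g (outer_edges n) = outer_edges n"
  shows "edge_img g (spoke_edges n) = spoke_edges n"
proof (rule subset_eq_img[OF S_sub], rule subsetI)
  fix f assume "f \<in> edge_img g (spoke_edges n)"
  then obtain s where s: "s \<in> spoke_edges n" and f: "f = g ` s" unfolding edge_img_def by blast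
  then obtain i j where ij: "i < n" "j < 2" "s = {U i j, V i (1 - j)}" unfolding spoke_edges_def by blast
  let ?e = "{U i j, U ((i+1) mod n) (1 - j)}"
  have e: "?e \<in> outer_edges n" using ij unfolding outer_edges_def by blast
  have "g ` ?e \<in> outer_edges n" using img_in[OF O_sub e] hO by simp
  then have gu: "isU (g (U i j))" using O_U by auto
  have sE: "s \<in> dgp_edges n k" using s S_sub by blast
  have fE: "f \<in> dgp_edges n k" using img_edge[OF sE] f by simp
  have "f \<notin> outer_edges n"
  proof
    assume "f \<in> outer_edges n"
    then have "g ` s \<in> edge_img g (outer_edges n)" using hO f by simp
    then have "s \<in> outer_edges n" using img_mem[OF O_sub sE] by blast
    then show False using OS_disj s by blast
  qed
  moreover have "f \<notin> inner_edges n k" using I_V gu f ij by auto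
  ultimately show "f \<in> spoke_edges n" using fE unfolding dgp_edges_def by blast
qed

lemma part1I:
  assumes hI: "edge_img g (inner_edges n k) = inner_edges n k"
  shows "edge_img g (spoke_edges n) = spoke_edges n"
proof (rule subset_eq_img[OF S_sub], rule subsetI)
  fix f assume "f \<in> edge_img g (spoke_edges n)"
  then obtain s where s: "s \<in> spoke_edges n" and f: "f = g ` s" unfolding edge_img_def by blast
  then obtain i j where ij: "i < n" "j < 2" "s = {U i j, V i (1 - j)}" unfolding spoke_edges_def by blast
  let ?e = "{V i (1-j), V ((i+k) mod n) (1 - (1-j))}"
  have e: "?e \<in> inner_edges n k" unfolding inner_edges_def mem_Collect_eq
    by (rule exI[of _ i], rule exI[of _ "1-j"]) (use ij in simp)
  have "g ` ?e \<in> inner_edges n k" using img_in[OF I_sub e] hI by simp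
  then have gu: "\<not> isU (g (V i (1-j)))" using I_V by auto
  have sE: "s \<in> dgp_edges n k" using s S_sub by blast
  have fE: "f \<in> dgp_edges n k" using img_edge[OF sE] f by simp
  have "f \<notin> inner_edges n k"
  proof
    assume "f \<in> inner_edges n k"
    then have "g ` s \<in> edge_img g (inner_edges n k)" using hI f by simp
    then have "s \<in> inner_edges n k" using img_mem[OF I_sub sE] by blast
    then show False using IS_disj s by blast
  qed
  moreover have "f \<notin> outer_edges n" using O_U gu f ij by auto
  ultimately show "f \<in> spoke_edges n" using fE unfolding dgp_edges_def by blast
qed

lemma P_edge:
  assumes hS: "edge_img g (spoke_edges n) = spoke_edges n"
    and e: "e \<in> dgp_edges n k" and x: "x \<in> e" and y: "y \<in> e"
  shows "(isU (g x) = isU x) = (isU (g y) = isU y)"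
proof (cases "x = y")
  case True then show ?thesis by simp
next
  case False
  have xv: "x \<in> dgp_verts n" and yv: "y \<in> dgp_verts n" using edge_sub[OF e] x y by auto
  have gxy: "g x \<noteq> g y" using g_inj xv yv False unfolding inj_on_def by blast
  have ge: "g ` e \<in> dgp_edges n k" using img_edge[OF e] .
  show ?thesis
  proof (cases "e \<in> spoke_edges n")
    case True
    have "g ` e \<in> spoke_edges n" using img_in[OF S_sub True] hS by simp
    then have "isU (g x) \<noteq> isU (g y)" using S_diff gxy x y by blast
    moreover have "isU x \<noteq> isU y" using S_diff True False x y by blast
    ultimately show ?thesis by blast
  next
    case False
    then have "e \<in> outer_edges n \<or> e \<in> inner_edges n k" using e unfolding dgp_edges_def by blast
    then have "isU x = isU y" using O_U I_V x y by blast
    moreover have "g ` e \<notin> spoke_edges n"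
    proof
      assume "g ` e \<in> spoke_edges n"
      then have "g ` e \<in> edge_img g (spoke_edges n)" using hS by simp
      then show False using img_mem[OF S_sub e] False by blast
    qed
    then have "g ` e \<in> outer_edges n \<or> g ` e \<in> inner_edges n k" using ge unfolding dgp_edges_def by blast
    then have "isU (g x) = isU (g y)" using O_U I_V x y by blast
    ultimately show ?thesis by blast
  qed
qed

lemma part2:
  assumes k1: "1 \<le> k" and kn: "2 * k < n"
    and hS: "edge_img g (spoke_edges n) = spoke_edges n" and par: "odd n \<or> even k"
  shows "(edge_img g (outer_edges n) = outer_edges n \<and>
                 edge_img g (inner_edges n k) = inner_edges n k)
              \<or> (edge_img g (outer_edges n) = inner_edges n k \<and>
                 edge_img g (inner_edges n k) = outer_edges n)"
proof -
  define P where "P x = (isU (g x) = isU x)" for x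
  have a: "P (U i j) = P (U ((i+1) mod n) (1-j))" if "i < n" "j < 2" for i j
  proof -
    have "{U i j, U ((i+1) mod n) (1-j)} \<in> dgp_edges n k"
      unfolding dgp_edges_def outer_edges_def using that by blast
    then show ?thesis unfolding P_def using P_edge[OF hS] by blast
  qed
  have b: "P (U i j) = P (V i (1-j))" if "i < n" "j < 2" for i j
  proof -
    have "{U i j, V i (1-j)} \<in> dgp_edges n k"
      unfolding dgp_edges_def spoke_edges_def using that by blast
    then show ?thesis unfolding P_def using P_edge[OF hS] by blast
  qed
  have c: "P (V i j) = P (V ((i+k) mod n) (1-j))" if "i < n" "j < 2" for i j
  proof -
    have "{V i j, V ((i+k) mod n) (1-j)} \<in> dgp_edges n k"
      unfolding dgp_edges_def inner_edges_def using that by blast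
    then show ?thesis unfolding P_def using P_edge[OF hS] by blast
  qed
  have it: "P (U i j) = P (U ((i+m) mod n) ((j+m) mod 2))" if "i < n" "j < 2" for i j m
  proof (induction m)
    case 0 then show ?case using that by simp
  next
    case (Suc m)
    have "P (U ((i+m) mod n) ((j+m) mod 2)) = P (U (((i+m) mod n + 1) mod n) (1 - (j+m) mod 2))"
      by (rule a) (use that in auto)
    moreover have "((i+m) mod n + 1) mod n = (i + Suc m) mod n" by (simp add: mod_Suc_eq)
    moreover have "1 - (j+m) mod 2 = (j + Suc m) mod 2" by presburger
    ultimately show ?case using Suc by simp
  qed
  have flip: "P (U a 0) = P (U a 1)" if "a < n" for a
  proof (cases "odd n")
    case True
    have "P (U a 0) = P (U ((a+n) mod n) ((0+n) mod 2))" using it[of a 0 n] that by simp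
    then show ?thesis using True that by (simp add: odd_iff_mod_2_eq_one)
  next
    case False
    then have ke: "even k" using par by blast
    define i where "i = (a + n - k) mod n"
    have i: "i < n" using that unfolding i_def by simp
    have ik: "(i + k) mod n = a"
    proof -
      have "(i + k) mod n = (a + n - k + k) mod n" unfolding i_def by (simp add: mod_add_left_eq)
      also have "a + n - k + k = a + n" using kn by simp
      finally show ?thesis using that by simp
    qed
    have "P (U i 0) = P (V i 1)" using b[of i 0] i by simp
    also have "\<dots> = P (V a 0)" using c[of i 1] i ik by simp
    also have "\<dots> = P (U a 1)" using b[of a 1] that by simp
    finally have 1: "P (U i 0) = P (U a 1)" .
    have "P (U i 0) = P (U a 0)" using it[of i 0 k] i ik ke by simp
    then show ?thesis using 1 by simp
  qed
  have allU: "P (U a j) = P (U 0 0)" if "a < n" "j < 2" for a j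
  proof -
    have "P (U a j) = P (U ((a + (n-a)) mod n) ((j + (n-a)) mod 2))" using it that by blast
    also have "(a + (n-a)) mod n = 0" using that by simp
    finally have "P (U a j) = P (U 0 ((j + (n-a)) mod 2))" .
    moreover have "(j + (n-a)) mod 2 = 0 \<or> (j + (n-a)) mod 2 = 1" by presburger
    moreover have "P (U 0 0) = P (U 0 1)" using flip kn by simp
    ultimately show ?thesis by auto
  qed
  have allV: "P (V a j) = P (U 0 0)" if "a < n" "j < 2" for a j
  proof -
    have "P (U a (1-j)) = P (V a (1 - (1-j)))" using b[of a "1-j"] that by simp
    moreover have "1 - (1 - j) = j" using that by simp
    ultimately show ?thesis using allU[of a "1-j"] that by simp
  qed
  have all: "P x = P (U 0 0)" if "x \<in> dgp_verts n" for x
    using that allU allV unfolding dgp_verts_def by blast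
  have Iv: "x \<in> dgp_verts n" if "x \<in> e" "e \<in> inner_edges n k" for x e
    using that edge_sub I_sub by blast
  have Ov: "x \<in> dgp_verts n" if "x \<in> e" "e \<in> outer_edges n" for x e
    using that edge_sub O_sub by blast
  show ?thesis
  proof (cases "P (U 0 0)")
    case True
    then have keep: "isU (g x) = isU x" if "x \<in> dgp_verts n" for x using all that P_def by blast
    have "edge_img g (outer_edges n) \<subseteq> outer_edges n"
    proof
      fix f assume "f \<in> edge_img g (outer_edges n)"
      then obtain e where e: "e \<in> outer_edges n" "f = g ` e" unfolding edge_img_def by blast
      have "\<forall>x\<in>f. isU x" using e keep O_U Ov by auto
      then show "f \<in> outer_edges n" using allU_O img_edge O_sub e by blast
    qed
    moreover have "edge_img g (inner_edges n k) \<subseteq> inner_edges n k"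
    proof
      fix f assume "f \<in> edge_img g (inner_edges n k)"
      then obtain e where e: "e \<in> inner_edges n k" "f = g ` e" unfolding edge_img_def by blast
      have "\<forall>x\<in>f. \<not> isU x" using e keep I_V Iv by auto
      then show "f \<in> inner_edges n k" using allV_I img_edge I_sub e by blast
    qed
    ultimately show ?thesis using subset_eq_img O_sub I_sub by blast
  next
    case False
    then have sw: "isU (g x) \<noteq> isU x" if "x \<in> dgp_verts n" for x using all that P_def by blast
    have 1: "edge_img g (outer_edges n) \<subseteq> inner_edges n k"
    proof
      fix f assume "f \<in> edge_img g (outer_edges n)"
      then obtain e where e: "e \<in> outer_edges n" "f = g ` e" unfolding edge_img_def by blast
      have "\<forall>x\<in>f. \<not> isU x" using e sw O_U Ov by auto
      then show "f \<in> inner_edges n k" using allV_I img_edge O_sub e by blast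
    qed
    have 2: "edge_img g (inner_edges n k) \<subseteq> outer_edges n"
    proof
      fix f assume "f \<in> edge_img g (inner_edges n k)"
      then obtain e where e: "e \<in> inner_edges n k" "f = g ` e" unfolding edge_img_def by blast
      have "\<forall>x\<in>f. isU x" using e sw I_V Iv by auto
      then show "f \<in> outer_edges n" using allU_O img_edge I_sub e by blast
    qed
    have fO: "finite (outer_edges n)" and fI: "finite (inner_edges n k)"
      using edges_fin O_sub I_sub finite_subset by blast+
    have cO: "card (edge_img g (outer_edges n)) = card (outer_edges n)" using card_img O_sub by blast
    have cI: "card (edge_img g (inner_edges n k)) = card (inner_edges n k)" using card_img I_sub by blast
    have "card (outer_edges n) \<le> card (inner_edges n k)" using cO card_mono[OF fI 1] by simp
    moreover have "card (inner_edges n k) \<le> card (outer_edges n)" using cI card_mono[OF fO 2] by simp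
    ultimately have "card (outer_edges n) = card (inner_edges n k)" by simp
    then show ?thesis using card_subset_eq[OF fI 1] card_subset_eq[OF fO 2] cO cI by simp
  qed
qed

end

theorem lemma5p1:
  fixes n k :: nat and g :: "vert \<Rightarrow> vert"
  assumes "1 \<le> k" and "2 * k < n"
    and "dgp_aut n k g"
  shows "((edge_img g (outer_edges n) = outer_edges n \<or>
           edge_img g (inner_edges n k) = inner_edges n k \<or>
           edge_img g (spoke_edges n) = spoke_edges n)
            \<longrightarrow> edge_img g (spoke_edges n) = spoke_edges n) \<and>
         (edge_img g (spoke_edges n) = spoke_edges n \<and> (odd n \<or> even k)
            \<longrightarrow> (edge_img g (outer_edges n) = outer_edges n \<and>
                 edge_img g (inner_edges n k) = inner_edges n k)
              \<or> (edge_img g (outer_edges n) = inner_edges n k \<and>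
                 edge_img g (inner_edges n k) = outer_edges n))"
  using part1O[OF assms(3)] part1I[OF assms(3)] part2[OF assms(3) assms(1) assms(2)] by blast

end
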